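(* Let $\mathbb{X}=\ell_\infty^3$ and let $\mathbb{Y}$ be a two-dimensional polygonal Banach space. Let $T\in\mathbb{L}(\mathbb{X},\mathbb{Y})$ with $\|T\|=1$. Then $T$ is an extreme contraction if and only if $|M_T\cap\operatorname{Ext}(B_{\mathbb{X}})|\geq 6$ and $T(M_T\cap\operatorname{Ext}(B_{\mathbb{X}}))\subseteq\operatorname{Ext}(B_{\mathbb{Y}})$.
   Context: $\mathbb{L}(\mathbb{X},\mathbb{Y})$ is the space of linear operators with the operator norm. $B_{\mathbb{X}}$ denotes the closed unit ball and $\operatorname{Ext}(\cdot)$ the set of its extreme points; $M_T=\{x\in\mathbb{X}:\|x\|=1,\ \|Tx\|=\|T\|\}$. A two-dimensional Banach space is polygonal if its unit ball has only finitely many extreme points. $T$ is an extreme contraction if it is an extreme point of the unit ball of $\mathbb{L}(\mathbb{X},\mathbb{Y})$. *)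

theory Defs
  imports "HOL-Analysis.Analysis"
begin

text \<open>X = l_infinity^3 is modelled as real^3 with the library sup-norm infnorm.
  Y, a two-dimensional real Banach space, is modelled (up to isometry) as real^2
  equipped with an arbitrary norm N.  Linear operators X -> Y are 3-column,
  2-row real matrices acting by matrix-vector multiplication.\<close>

definition is_norm :: "('a::real_vector \<Rightarrow> real) \<Rightarrow> bool" where
  "is_norm N \<longleftrightarrow>
     (\<forall>x. N x = 0 \<longleftrightarrow> x = 0) \<and>
     (\<forall>c x. N (c *\<^sub>R x) = \<bar>c\<bar> * N x) \<and>
     (\<forall>x y. N (x + y) \<le> N x + N y)"

definition unit_ball :: "('a::real_vector \<Rightarrow> real) \<Rightarrow> 'a set" where
  "unit_ball N = {x. N x \<le> 1}"

definition Ext :: "'a::real_vector set \<Rightarrow> 'a set" where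
  "Ext S = {x. x extreme_point_of S}"

definition polygonal :: "(real^2 \<Rightarrow> real) \<Rightarrow> bool" where
  "polygonal N \<longleftrightarrow> finite (Ext (unit_ball N))"

definition op_norm :: "(real^2 \<Rightarrow> real) \<Rightarrow> real^3^2 \<Rightarrow> real" where
  "op_norm N A = Sup {N (A *v x) | x. infnorm x \<le> 1}"

definition norm_attaining :: "(real^2 \<Rightarrow> real) \<Rightarrow> real^3^2 \<Rightarrow> (real^3) set" where
  "norm_attaining N A = {x. infnorm x = 1 \<and> N (A *v x) = op_norm N A}"

definition extreme_contraction :: "(real^2 \<Rightarrow> real) \<Rightarrow> real^3^2 \<Rightarrow> bool" where
  "extreme_contraction N A \<longleftrightarrow> A extreme_point_of {B. op_norm N B \<le> 1}"

end

theory Submission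
  imports Defs
begin



lemma MV: "(B :: real^3^2) *v x = x$1 *\<^sub>R column 1 B + x$2 *\<^sub>R column 2 B + x$3 *\<^sub>R column 3 B"
  by (simp add: matrix_mult_sum sum_3 scalar_mult_eq_scaleR)

lemma infnorm_le1: "infnorm (x::real^3) \<le> 1 \<longleftrightarrow> (\<forall>i. \<bar>x$i\<bar> \<le> 1)"
proof
  assume "infnorm x \<le> 1" then show "\<forall>i. \<bar>x$i\<bar> \<le> 1"
    using component_le_infnorm_cart[of x] by (meson order_trans)
next
  assume h: "\<forall>i. \<bar>x$i\<bar> \<le> 1"
  show "infnorm x \<le> 1" unfolding infnorm_cart
    by (rule cSup_least) (use h in auto)
qed

definition V8set :: "(real^3) set" where
  "V8set = {vector [1, 1, 1], vector [-1, -1, -1], vector [1, 1, -1], vector [-1, -1, 1],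
            vector [1, -1, 1], vector [-1, 1, -1], vector [-1, 1, 1], vector [1, -1, -1]}"

lemma vec3_eq: "(vector [a1, a2, a3] :: real^3) = vector [b1, b2, b3] \<longleftrightarrow> a1 = b1 \<and> a2 = b2 \<and> a3 = b3"
  by (simp add: vec_eq_iff forall_3)

lemma V8char: "(\<forall>i. \<bar>(x::real^3)$i\<bar> = 1) \<longleftrightarrow> x \<in> V8set"
proof
  assume h: "\<forall>i. \<bar>x$i\<bar> = 1"
  have x: "x = vector [x$1, x$2, x$3]" by (simp add: vec_eq_iff forall_3)
  have s: "x$i = 1 \<or> x$i = -1" for i using h[rule_format, of i] by arith
  have "vector [x$1, x$2, x$3] \<in> V8set"
    using s[of 1] s[of 2] s[of 3] unfolding V8set_def by (elim disjE) (simp_all add: vec3_eq)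
  then show "x \<in> V8set" using x by metis
next
  assume "x \<in> V8set"
  then show "\<forall>i. \<bar>x$i\<bar> = 1" unfolding V8set_def by (auto simp: forall_3)
qed

lemma inf1: assumes h: "\<forall>i. \<bar>(x::real^3)$i\<bar> = 1" shows "infnorm x = 1"
proof -
  have a: "infnorm x \<le> 1" using h by (simp add: infnorm_le1)
  have b: "1 \<le> infnorm x" using component_le_infnorm_cart[of x 1] h by simp
  show ?thesis using a b by linarith
qed

lemma seg1:
  fixes u p q :: real
  assumes "0 < u" "u < 1" "p \<le> 1" "q \<le> 1" "(1 - u) * p + u * q = 1"
  shows "p = 1 \<and> q = 1"
proof -
  have h1: "0 \<le> (1 - u) * (1 - p)" using assms by (intro mult_nonneg_nonneg) auto
  have h2: "0 \<le> u * (1 - q)" using assms by (intro mult_nonneg_nonneg) auto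
  have e: "(1 - u) * (1 - p) + u * (1 - q) = 1 - ((1 - u) * p + u * q)" by (simp add: algebra_simps)
  have h3: "(1 - u) * (1 - p) + u * (1 - q) = 0" unfolding e assms(5) by simp
  have "(1 - u) * (1 - p) = 0" "u * (1 - q) = 0" using h1 h2 h3 by linarith+
  then show ?thesis using assms(1,2) by simp
qed

lemma cube_ext: "(x::real^3) extreme_point_of unit_ball infnorm \<longleftrightarrow> (\<forall>i. \<bar>x$i\<bar> = 1)"
proof
  assume ext: "x extreme_point_of unit_ball infnorm"
  then have xb: "\<forall>i. \<bar>x$i\<bar> \<le> 1" unfolding extreme_point_of_def unit_ball_def by (simp add: infnorm_le1)
  show "\<forall>i. \<bar>x$i\<bar> = 1"
  proof (rule ccontr)
    assume "\<not> (\<forall>i. \<bar>x$i\<bar> = 1)"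
    then obtain i where i: "\<bar>x$i\<bar> < 1" using xb by (meson le_less)
    define d where "d = 1 - \<bar>x$i\<bar>"
    have d0: "d > 0" using i unfolding d_def by simp
    define a where "a = x - d *\<^sub>R axis i 1"
    define b where "b = x + d *\<^sub>R axis i 1"
    have di: "\<bar>x$i - d\<bar> \<le> 1" "\<bar>x$i + d\<bar> \<le> 1" using i unfolding d_def by arith+
    have aj: "\<bar>a$j\<bar> \<le> 1" for j
    proof (cases "j = i")
      case True then show ?thesis using di unfolding a_def by (simp add: axis_def)
    next
      case False then show ?thesis using xb unfolding a_def by (simp add: axis_def)
    qed
    have bj: "\<bar>b$j\<bar> \<le> 1" for j
    proof (cases "j = i")
      case True then show ?thesis using di unfolding b_def by (simp add: axis_def)
    next
      case False then show ?thesis using xb unfolding b_def by (simp add: axis_def)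
    qed
    have ab: "a \<in> unit_ball infnorm" "b \<in> unit_ball infnorm"
      unfolding unit_ball_def using aj bj by (auto simp: infnorm_le1)
    have "a \<noteq> b"
    proof
      assume "a = b"
      then have "a$i = b$i" by simp
      then show False using d0 unfolding a_def b_def by (simp add: axis_def)
    qed
    then have "midpoint a b \<in> open_segment a b" by simp
    moreover have "midpoint a b = x" unfolding midpoint_eq_iff a_def b_def by (simp add: algebra_simps)
    ultimately show False using ext ab unfolding extreme_point_of_def by auto
  qed
next
  assume h: "\<forall>i. \<bar>x$i\<bar> = 1"
  show "x extreme_point_of unit_ball infnorm" unfolding extreme_point_of_def
  proof (intro conjI ballI)
    show "x \<in> unit_ball infnorm" using h by (simp add: unit_ball_def infnorm_le1)
    fix a b :: "real^3" assume a: "a \<in> unit_ball infnorm" and b: "b \<in> unit_ball infnorm"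
    show "x \<notin> open_segment a b"
    proof
      assume "x \<in> open_segment a b"
      then obtain u where u: "a \<noteq> b" "0 < u" "u < 1" "x = (1 - u) *\<^sub>R a + u *\<^sub>R b"
        by (auto simp: in_segment)
      have ai: "\<bar>a$i\<bar> \<le> 1" and bi: "\<bar>b$i\<bar> \<le> 1" for i
        using a b by (auto simp: unit_ball_def infnorm_le1)
      have "a$i = b$i" for i
      proof -
        have xi: "x$i = (1 - u) * a$i + u * b$i" using u(4) by simp
        have "x$i = 1 \<or> x$i = -1" using h[rule_format, of i] by arith
        then show ?thesis
        proof
          assume "x$i = 1"
          then have "a$i = 1 \<and> b$i = 1" using seg1[OF u(2,3), of "a$i" "b$i"] ai[of i] bi[of i] xi by auto
          then show ?thesis by simp
        next
          assume "x$i = -1"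
          then have "(1 - u) * (- a$i) + u * (- b$i) = 1" using xi by (simp add: algebra_simps)
          then have "- a$i = 1 \<and> - b$i = 1" using seg1[OF u(2,3), of "- a$i" "- b$i"] ai[of i] bi[of i] by auto
          then show ?thesis by simp
        qed
      qed
      then have "a = b" by (simp add: vec_eq_iff)
      then show False using u(1) by simp
    qed
  qed
qed

lemma card_le4: "card {a, b, c, d} \<le> 4"
  using card_length[of "[a, b, c, d]"] by simp

lemma card8:
  fixes P :: "real^3 \<Rightarrow> bool"
  assumes n: "P (vector [-1, -1, -1]) = P (vector [1, 1, 1])" "P (vector [-1, -1, 1]) = P (vector [1, 1, -1])"
    "P (vector [-1, 1, -1]) = P (vector [1, -1, 1])" "P (vector [1, -1, -1]) = P (vector [-1, 1, 1])"
  shows "6 \<le> card {v \<in> V8set. P v} \<longleftrightarrow>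
    (P (vector [1, 1, 1]) \<and> P (vector [1, 1, -1]) \<and> P (vector [1, -1, 1])) \<or>
    (P (vector [1, 1, 1]) \<and> P (vector [1, 1, -1]) \<and> P (vector [-1, 1, 1])) \<or>
    (P (vector [1, 1, 1]) \<and> P (vector [1, -1, 1]) \<and> P (vector [-1, 1, 1])) \<or>
    (P (vector [1, 1, -1]) \<and> P (vector [1, -1, 1]) \<and> P (vector [-1, 1, 1]))" (is "?L \<longleftrightarrow> ?R")
proof
  have fin: "finite {v \<in> V8set. P v}" unfolding V8set_def by simp
  assume L: ?L
  show ?R
  proof (rule ccontr)
    assume nR: "\<not> ?R"
    then have "(\<not> P (vector [1, 1, 1]) \<and> \<not> P (vector [1, 1, -1])) \<or> (\<not> P (vector [1, 1, 1]) \<and> \<not> P (vector [1, -1, 1])) \<or>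
       (\<not> P (vector [1, 1, 1]) \<and> \<not> P (vector [-1, 1, 1])) \<or> (\<not> P (vector [1, 1, -1]) \<and> \<not> P (vector [1, -1, 1])) \<or>
       (\<not> P (vector [1, 1, -1]) \<and> \<not> P (vector [-1, 1, 1])) \<or> (\<not> P (vector [1, -1, 1]) \<and> \<not> P (vector [-1, 1, 1]))"
      by blast
    then obtain w x y z where sub: "{v \<in> V8set. P v} \<subseteq> {w, x, y, z}"
    proof (elim disjE conjE)
      assume "\<not> P (vector [1, 1, 1])" "\<not> P (vector [1, 1, -1])"
      then show thesis using n by (intro that[of "vector [1, -1, 1]" "vector [-1, 1, -1]" "vector [-1, 1, 1]" "vector [1, -1, -1]"]) (auto simp: V8set_def)
    next
      assume "\<not> P (vector [1, 1, 1])" "\<not> P (vector [1, -1, 1])"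
      then show thesis using n by (intro that[of "vector [1, 1, -1]" "vector [-1, -1, 1]" "vector [-1, 1, 1]" "vector [1, -1, -1]"]) (auto simp: V8set_def)
    next
      assume "\<not> P (vector [1, 1, 1])" "\<not> P (vector [-1, 1, 1])"
      then show thesis using n by (intro that[of "vector [1, 1, -1]" "vector [-1, -1, 1]" "vector [1, -1, 1]" "vector [-1, 1, -1]"]) (auto simp: V8set_def)
    next
      assume "\<not> P (vector [1, 1, -1])" "\<not> P (vector [1, -1, 1])"
      then show thesis using n by (intro that[of "vector [1, 1, 1]" "vector [-1, -1, -1]" "vector [-1, 1, 1]" "vector [1, -1, -1]"]) (auto simp: V8set_def)
    next
      assume "\<not> P (vector [1, 1, -1])" "\<not> P (vector [-1, 1, 1])"
      then show thesis using n by (intro that[of "vector [1, 1, 1]" "vector [-1, -1, -1]" "vector [1, -1, 1]" "vector [-1, 1, -1]"]) (auto simp: V8set_def)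
    next
      assume "\<not> P (vector [1, -1, 1])" "\<not> P (vector [-1, 1, 1])"
      then show thesis using n by (intro that[of "vector [1, 1, 1]" "vector [-1, -1, -1]" "vector [1, 1, -1]" "vector [-1, -1, 1]"]) (auto simp: V8set_def)
    qed
    have "card {v \<in> V8set. P v} \<le> card {w, x, y, z}" by (rule card_mono[OF _ sub]) simp
    also have "\<dots> \<le> 4" by (rule card_le4)
    finally show False using L by simp
  qed
next
  have fin: "finite {v \<in> V8set. P v}" unfolding V8set_def by simp
  have six: "6 \<le> card {v \<in> V8set. P v}" if "{p, -p, q, -q, r, -r} \<subseteq> {v \<in> V8set. P v}"
     "card {p, -p, q, -q, r, -r} = 6" for p q r :: "real^3"
    using card_mono[OF fin that(1)] that(2) by simp
  have neg: "- vector [a1, a2, a3] = (vector [- a1, - a2, - a3] :: real^3)" for a1 a2 a3 :: real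
    by (simp add: vec_eq_iff forall_3)
  assume ?R
  then show ?L
  proof (elim disjE conjE)
    assume h: "P (vector [1, 1, 1])" "P (vector [1, 1, -1])" "P (vector [1, -1, 1])"
    show ?L by (rule six[of "vector [1, 1, 1]" "vector [1, 1, -1]" "vector [1, -1, 1]"])
      (use h n in \<open>simp_all add: neg vec3_eq V8set_def\<close>)
  next
    assume h: "P (vector [1, 1, 1])" "P (vector [1, 1, -1])" "P (vector [-1, 1, 1])"
    show ?L by (rule six[of "vector [1, 1, 1]" "vector [1, 1, -1]" "vector [-1, 1, 1]"])
      (use h n in \<open>simp_all add: neg vec3_eq V8set_def\<close>)
  next
    assume h: "P (vector [1, 1, 1])" "P (vector [1, -1, 1])" "P (vector [-1, 1, 1])"
    show ?L by (rule six[of "vector [1, 1, 1]" "vector [1, -1, 1]" "vector [-1, 1, 1]"])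
      (use h n in \<open>simp_all add: neg vec3_eq V8set_def\<close>)
  next
    assume h: "P (vector [1, 1, -1])" "P (vector [1, -1, 1])" "P (vector [-1, 1, 1])"
    show ?L by (rule six[of "vector [1, 1, -1]" "vector [1, -1, 1]" "vector [-1, 1, 1]"])
      (use h n in \<open>simp_all add: neg vec3_eq V8set_def\<close>)
  qed
qed

lemma comb:
  assumes "c1 = (1 - u) *\<^sub>R a1 + u *\<^sub>R b1" "c2 = (1 - u) *\<^sub>R a2 + u *\<^sub>R b2" "c3 = (1 - u) *\<^sub>R a3 + u *\<^sub>R (b3::real^2)"
  shows "c1 + c2 + c3 = (1 - u) *\<^sub>R (a1 + a2 + a3) + u *\<^sub>R (b1 + b2 + b3)"
    "c1 + c2 - c3 = (1 - u) *\<^sub>R (a1 + a2 - a3) + u *\<^sub>R (b1 + b2 - b3)"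
    "c1 - c2 + c3 = (1 - u) *\<^sub>R (a1 - a2 + a3) + u *\<^sub>R (b1 - b2 + b3)"
    "- c1 + c2 + c3 = (1 - u) *\<^sub>R (- a1 + a2 + a3) + u *\<^sub>R (- b1 + b2 + b3)"
  unfolding assms by (simp_all add: algebra_simps)

lemma cols3r:
  fixes x1 x2 x3 y1 y2 y3 :: real
  assumes "(x1 + x2 + x3 = y1 + y2 + y3 \<and> x1 + x2 - x3 = y1 + y2 - y3 \<and> x1 - x2 + x3 = y1 - y2 + y3) \<or>
     (x1 + x2 + x3 = y1 + y2 + y3 \<and> x1 + x2 - x3 = y1 + y2 - y3 \<and> - x1 + x2 + x3 = - y1 + y2 + y3) \<or>
     (x1 + x2 + x3 = y1 + y2 + y3 \<and> x1 - x2 + x3 = y1 - y2 + y3 \<and> - x1 + x2 + x3 = - y1 + y2 + y3) \<or>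
     (x1 + x2 - x3 = y1 + y2 - y3 \<and> x1 - x2 + x3 = y1 - y2 + y3 \<and> - x1 + x2 + x3 = - y1 + y2 + y3)"
  shows "x1 = y1 \<and> x2 = y2 \<and> x3 = y3"
  using assms by (elim disjE conjE; intro conjI; linarith)

lemma cols3:
  fixes x1 x2 x3 y1 y2 y3 :: "real^2"
  assumes "(x1 + x2 + x3 = y1 + y2 + y3 \<and> x1 + x2 - x3 = y1 + y2 - y3 \<and> x1 - x2 + x3 = y1 - y2 + y3) \<or>
     (x1 + x2 + x3 = y1 + y2 + y3 \<and> x1 + x2 - x3 = y1 + y2 - y3 \<and> - x1 + x2 + x3 = - y1 + y2 + y3) \<or>
     (x1 + x2 + x3 = y1 + y2 + y3 \<and> x1 - x2 + x3 = y1 - y2 + y3 \<and> - x1 + x2 + x3 = - y1 + y2 + y3) \<or>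
     (x1 + x2 - x3 = y1 + y2 - y3 \<and> x1 - x2 + x3 = y1 - y2 + y3 \<and> - x1 + x2 + x3 = - y1 + y2 + y3)"
  shows "x1 = y1 \<and> x2 = y2 \<and> x3 = y3"
proof -
  have "x1$j = y1$j \<and> x2$j = y2$j \<and> x3$j = y3$j" for j
  proof (rule cols3r)
    have h1: "x1$j + x2$j + x3$j = y1$j + y2$j + y3$j" if "x1 + x2 + x3 = y1 + y2 + y3"
      using arg_cong[OF that, of "\<lambda>v. v$j"] by simp
    have h2: "x1$j + x2$j - x3$j = y1$j + y2$j - y3$j" if "x1 + x2 - x3 = y1 + y2 - y3"
      using arg_cong[OF that, of "\<lambda>v. v$j"] by simp
    have h3: "x1$j - x2$j + x3$j = y1$j - y2$j + y3$j" if "x1 - x2 + x3 = y1 - y2 + y3"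
      using arg_cong[OF that, of "\<lambda>v. v$j"] by simp
    have h4: "- x1$j + x2$j + x3$j = - y1$j + y2$j + y3$j" if "- x1 + x2 + x3 = - y1 + y2 + y3"
      using arg_cong[OF that, of "\<lambda>v. v$j"] by simp
    show "(x1$j + x2$j + x3$j = y1$j + y2$j + y3$j \<and> x1$j + x2$j - x3$j = y1$j + y2$j - y3$j \<and> x1$j - x2$j + x3$j = y1$j - y2$j + y3$j) \<or>
     (x1$j + x2$j + x3$j = y1$j + y2$j + y3$j \<and> x1$j + x2$j - x3$j = y1$j + y2$j - y3$j \<and> - x1$j + x2$j + x3$j = - y1$j + y2$j + y3$j) \<or>
     (x1$j + x2$j + x3$j = y1$j + y2$j + y3$j \<and> x1$j - x2$j + x3$j = y1$j - y2$j + y3$j \<and> - x1$j + x2$j + x3$j = - y1$j + y2$j + y3$j) \<or>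
     (x1$j + x2$j - x3$j = y1$j + y2$j - y3$j \<and> x1$j - x2$j + x3$j = y1$j - y2$j + y3$j \<and> - x1$j + x2$j + x3$j = - y1$j + y2$j + y3$j)"
      using assms h1 h2 h3 h4 by blast
  qed
  then show ?thesis by (simp add: vec_eq_iff)
qed

lemma column_lin: "column i ((1 - u) *\<^sub>R A + u *\<^sub>R (B::real^3^2)) = (1 - u) *\<^sub>R column i A + u *\<^sub>R column i B"
  by (simp add: column_def vec_eq_iff)

lemma mat_eq_cols: "column 1 A = column 1 B \<Longrightarrow> column 2 A = column 2 B \<Longrightarrow> column 3 A = column 3 (B::real^3^2) \<Longrightarrow> A = B"
proof -
  assume h: "column 1 A = column 1 B" "column 2 A = column 2 B" "column 3 A = column 3 B"
  have "column i A = column i B" for i using h exhaust_3[of i] by auto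
  then show "A = B" by (simp add: vec_eq_iff column_def)
qed

locale nm =
  fixes N :: "real^2 \<Rightarrow> real"
  assumes isn: "is_norm N"
begin

lemma Nscale: "N (c *\<^sub>R x) = \<bar>c\<bar> * N x"
  using isn unfolding is_norm_def by blast
lemma Ntri: "N (x + y) \<le> N x + N y"
  using isn unfolding is_norm_def by blast
lemma N0iff: "N x = 0 \<longleftrightarrow> x = 0"
  using isn unfolding is_norm_def by blast
lemma N0[simp]: "N 0 = 0" using N0iff by blast
lemma Nneg[simp]: "N (- x) = N x"
  using Nscale[of "-1" x] by simp
lemma Nnonneg: "0 \<le> N x"
proof -
  have "N (x + - x) \<le> N x + N (-x)" by (rule Ntri)
  then show ?thesis by simp
qed
lemma Nneg': "x = - y \<Longrightarrow> N x = N y" by simp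

lemma Nconv: assumes "N p \<le> 1" "N q \<le> 1" "0 \<le> t" "t \<le> 1"
  shows "N (t *\<^sub>R p + (1 - t) *\<^sub>R q) \<le> 1"
proof -
  have "N (t *\<^sub>R p + (1 - t) *\<^sub>R q) \<le> N (t *\<^sub>R p) + N ((1 - t) *\<^sub>R q)" by (rule Ntri)
  also have "\<dots> = t * N p + (1 - t) * N q" using assms by (simp add: Nscale)
  also have "\<dots> \<le> t * 1 + (1 - t) * 1"
    using assms by (intro add_mono mult_left_mono) auto
  finally show ?thesis by simp
qed

lemma Nline: assumes "N (z + w) \<le> 1" "N (- z + w) \<le> 1" "\<bar>x\<bar> \<le> 1"
  shows "N (x *\<^sub>R z + w) \<le> 1"
proof -
  have "N (((1 + x)/2) *\<^sub>R (z + w) + (1 - (1 + x)/2) *\<^sub>R (- z + w)) \<le> 1"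
    using assms by (intro Nconv) auto
  moreover have "((1 + x)/2) *\<^sub>R (z + w) + (1 - (1 + x)/2) *\<^sub>R (- z + w) = x *\<^sub>R z + w"
  proof -
    have e: "a *\<^sub>R (z + w) + b *\<^sub>R (- z + w) = (a - b) *\<^sub>R z + (a + b) *\<^sub>R w" for a b
      by (simp add: algebra_simps)
    show ?thesis unfolding e by simp
  qed
  ultimately show ?thesis by simp
qed

definition pert :: "real^2 \<Rightarrow> real^2 \<Rightarrow> bool" where
  "pert p y \<longleftrightarrow> N (p + y) \<le> 1 \<and> N (p - y) \<le> 1"

lemma pert_scale: assumes "pert p y" "\<bar>r\<bar> \<le> 1" shows "pert p (r *\<^sub>R y)"
proof -
  have a: "N (y + p) \<le> 1" "N (- y + p) \<le> 1" using assms unfolding pert_def by (auto simp: algebra_simps)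
  have "N (r *\<^sub>R y + p) \<le> 1" by (rule Nline[OF a assms(2)])
  moreover have "N ((-r) *\<^sub>R y + p) \<le> 1" by (rule Nline[OF a]) (use assms in auto)
  ultimately show ?thesis unfolding pert_def by (auto simp: algebra_simps)
qed

lemma pert_negp: "pert (- p) y \<longleftrightarrow> pert p y"
proof -
  have "N (- p + y) = N (p - y)" by (rule Nneg') (simp add: algebra_simps)
  moreover have "N (- p - y) = N (p + y)" by (rule Nneg') (simp add: algebra_simps)
  ultimately show ?thesis unfolding pert_def by auto
qed

lemma pert_negy: "pert p (- y) \<longleftrightarrow> pert p y"
  unfolding pert_def by auto

definition G :: "real^2 \<Rightarrow> real^2 \<Rightarrow> real^2 \<Rightarrow> bool" where
  "G c1 c2 c3 \<longleftrightarrow> N (c1 + c2 + c3) \<le> 1 \<and> N (c1 + c2 - c3) \<le> 1 \<and>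
      N (c1 - c2 + c3) \<le> 1 \<and> N (- c1 + c2 + c3) \<le> 1"

lemma G8: assumes "G c1 c2 c3"
  shows "N (c1 + c2 + c3) \<le> 1" "N (c1 + c2 - c3) \<le> 1" "N (c1 - c2 + c3) \<le> 1" "N (- c1 + c2 + c3) \<le> 1"
    "N (- c1 - c2 - c3) \<le> 1" "N (- c1 - c2 + c3) \<le> 1" "N (- c1 + c2 - c3) \<le> 1" "N (c1 - c2 - c3) \<le> 1"
proof -
  show g: "N (c1 + c2 + c3) \<le> 1" "N (c1 + c2 - c3) \<le> 1" "N (c1 - c2 + c3) \<le> 1" "N (- c1 + c2 + c3) \<le> 1"
    using assms unfolding G_def by auto
  have "N (- c1 - c2 - c3) = N (c1 + c2 + c3)" by (rule Nneg') (simp add: algebra_simps)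
  then show "N (- c1 - c2 - c3) \<le> 1" using g by simp
  have "N (- c1 - c2 + c3) = N (c1 + c2 - c3)" by (rule Nneg') (simp add: algebra_simps)
  then show "N (- c1 - c2 + c3) \<le> 1" using g by simp
  have "N (- c1 + c2 - c3) = N (c1 - c2 + c3)" by (rule Nneg') (simp add: algebra_simps)
  then show "N (- c1 + c2 - c3) \<le> 1" using g by simp
  have "N (c1 - c2 - c3) = N (- c1 + c2 + c3)" by (rule Nneg') (simp add: algebra_simps)
  then show "N (c1 - c2 - c3) \<le> 1" using g by simp
qed

lemma cube: assumes "G c1 c2 c3" "\<bar>x1\<bar> \<le> 1" "\<bar>x2\<bar> \<le> 1" "\<bar>x3\<bar> \<le> 1"
  shows "N (x1 *\<^sub>R c1 + x2 *\<^sub>R c2 + x3 *\<^sub>R c3) \<le> 1"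
proof -
  note g = G8[OF assms(1)]
  have s1: "N (x3 *\<^sub>R c3 + (c1 + c2)) \<le> 1"
    by (rule Nline) (use g in \<open>simp_all add: algebra_simps assms\<close>)
  have s2: "N (x3 *\<^sub>R c3 + (c1 - c2)) \<le> 1"
    by (rule Nline) (use g in \<open>simp_all add: algebra_simps assms\<close>)
  have s3: "N (x3 *\<^sub>R c3 + (- c1 + c2)) \<le> 1"
    by (rule Nline) (use g in \<open>simp_all add: algebra_simps assms\<close>)
  have s4: "N (x3 *\<^sub>R c3 + (- c1 - c2)) \<le> 1"
    by (rule Nline) (use g in \<open>simp_all add: algebra_simps assms\<close>)
  have t1: "N (x2 *\<^sub>R c2 + (c1 + x3 *\<^sub>R c3)) \<le> 1"
    by (rule Nline) (use s1 s2 in \<open>simp_all add: algebra_simps assms\<close>)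
  have t2: "N (x2 *\<^sub>R c2 + (- c1 + x3 *\<^sub>R c3)) \<le> 1"
    by (rule Nline) (use s3 s4 in \<open>simp_all add: algebra_simps assms\<close>)
  have "N (x1 *\<^sub>R c1 + (x2 *\<^sub>R c2 + x3 *\<^sub>R c3)) \<le> 1"
    by (rule Nline) (use t1 t2 in \<open>simp_all add: algebra_simps assms\<close>)
  then show ?thesis by (simp add: algebra_simps)
qed

definition NE :: "real^2 \<Rightarrow> real^2 \<Rightarrow> real^2 \<Rightarrow> bool" where
  "NE c1 c2 c3 \<longleftrightarrow> (\<exists>d1 d2 d3. (d1 \<noteq> 0 \<or> d2 \<noteq> 0 \<or> d3 \<noteq> 0) \<and>
     G (c1 + d1) (c2 + d2) (c3 + d3) \<and> G (c1 - d1) (c2 - d2) (c3 - d3))"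

definition okp :: "real^2 \<Rightarrow> real^2 \<Rightarrow> bool" where
  "okp p z \<longleftrightarrow> (\<exists>e>0. \<forall>\<epsilon>. 0 < \<epsilon> \<longrightarrow> \<epsilon> \<le> e \<longrightarrow> pert p (\<epsilon> *\<^sub>R z))"

lemma okp_lt: assumes "N p < 1" shows "okp p z"
proof -
  define e where "e = (1 - N p) / (N z + 1)"
  have Nz: "0 \<le> N z" by (rule Nnonneg)
  have e0: "e > 0" using assms Nz unfolding e_def by auto
  have "pert p (\<epsilon> *\<^sub>R z)" if "0 < \<epsilon>" "\<epsilon> \<le> e" for \<epsilon>
  proof -
    have "\<epsilon> * N z \<le> e * N z" using that Nz by (simp add: mult_right_mono)
    also have "\<dots> \<le> 1 - N p" unfolding e_def using assms Nz by (simp add: field_simps)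
    finally have b: "\<epsilon> * N z \<le> 1 - N p" .
    have "N (p + \<epsilon> *\<^sub>R z) \<le> N p + N (\<epsilon> *\<^sub>R z)" by (rule Ntri)
    also have "\<dots> = N p + \<epsilon> * N z" using that by (simp add: Nscale)
    finally have 1: "N (p + \<epsilon> *\<^sub>R z) \<le> 1" using b by simp
    have "N (p + - (\<epsilon> *\<^sub>R z)) \<le> N p + N (- (\<epsilon> *\<^sub>R z))" by (rule Ntri)
    also have "\<dots> = N p + \<epsilon> * N z" using that by (simp add: Nscale)
    finally have 2: "N (p - \<epsilon> *\<^sub>R z) \<le> 1" using b by simp
    show ?thesis using 1 2 unfolding pert_def by simp
  qed
  then show ?thesis unfolding okp_def using e0 by blast
qed

lemma okp_0: assumes "N p \<le> 1" shows "okp p 0"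
  unfolding okp_def pert_def using assms by (auto intro: exI[of _ 1])

lemma okp_pert: assumes "pert p y" shows "okp p (r *\<^sub>R y)"
proof -
  define e where "e = 1 / (\<bar>r\<bar> + 1)"
  have e0: "e > 0" unfolding e_def by (simp add: add_pos_nonneg)
  have "pert p (\<epsilon> *\<^sub>R (r *\<^sub>R y))" if "0 < \<epsilon>" "\<epsilon> \<le> e" for \<epsilon>
  proof -
    have "\<epsilon> * \<bar>r\<bar> \<le> e * \<bar>r\<bar>" using that by (simp add: mult_right_mono)
    also have "\<dots> \<le> 1" unfolding e_def by (simp add: field_simps)
    finally have "\<bar>\<epsilon> * r\<bar> \<le> 1" using that by (simp add: abs_mult)
    then have "pert p ((\<epsilon> * r) *\<^sub>R y)" by (rule pert_scale[OF assms])
    then show ?thesis by simp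
  qed
  then show ?thesis unfolding okp_def using e0 by blast
qed

lemma okp_neg: assumes "okp p z" shows "okp (- p) (- z)"
  using assms unfolding okp_def
  by (metis pert_negp pert_negy scaleR_minus_right)

lemma NE_okp:
  assumes nz: "d1 \<noteq> 0 \<or> d2 \<noteq> 0 \<or> d3 \<noteq> 0"
    and oa: "okp (c1 + c2 + c3) (d1 + d2 + d3)"
    and ob: "okp (c1 + c2 - c3) (d1 + d2 - d3)"
    and oc: "okp (c1 - c2 + c3) (d1 - d2 + d3)"
    and od: "okp (- c1 + c2 + c3) (- d1 + d2 + d3)"
  shows "NE c1 c2 c3"
proof -
  obtain ea where ea: "ea > 0" "\<And>\<epsilon>. 0 < \<epsilon> \<Longrightarrow> \<epsilon> \<le> ea \<Longrightarrow> pert (c1 + c2 + c3) (\<epsilon> *\<^sub>R (d1 + d2 + d3))"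
    using oa unfolding okp_def by blast
  obtain eb where eb: "eb > 0" "\<And>\<epsilon>. 0 < \<epsilon> \<Longrightarrow> \<epsilon> \<le> eb \<Longrightarrow> pert (c1 + c2 - c3) (\<epsilon> *\<^sub>R (d1 + d2 - d3))"
    using ob unfolding okp_def by blast
  obtain ec where ec: "ec > 0" "\<And>\<epsilon>. 0 < \<epsilon> \<Longrightarrow> \<epsilon> \<le> ec \<Longrightarrow> pert (c1 - c2 + c3) (\<epsilon> *\<^sub>R (d1 - d2 + d3))"
    using oc unfolding okp_def by blast
  obtain ed where ed: "ed > 0" "\<And>\<epsilon>. 0 < \<epsilon> \<Longrightarrow> \<epsilon> \<le> ed \<Longrightarrow> pert (- c1 + c2 + c3) (\<epsilon> *\<^sub>R (- d1 + d2 + d3))"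
    using od unfolding okp_def by blast
  define \<epsilon> where "\<epsilon> = min (min ea eb) (min ec ed)"
  have e0: "\<epsilon> > 0" using ea eb ec ed unfolding \<epsilon>_def by auto
  have pa: "pert (c1 + c2 + c3) (\<epsilon> *\<^sub>R (d1 + d2 + d3))" using ea e0 by (auto simp: \<epsilon>_def)
  have pb: "pert (c1 + c2 - c3) (\<epsilon> *\<^sub>R (d1 + d2 - d3))" using eb e0 by (auto simp: \<epsilon>_def)
  have pc: "pert (c1 - c2 + c3) (\<epsilon> *\<^sub>R (d1 - d2 + d3))" using ec e0 by (auto simp: \<epsilon>_def)
  have pd: "pert (- c1 + c2 + c3) (\<epsilon> *\<^sub>R (- d1 + d2 + d3))" using ed e0 by (auto simp: \<epsilon>_def)
  have "G (c1 + \<epsilon> *\<^sub>R d1) (c2 + \<epsilon> *\<^sub>R d2) (c3 + \<epsilon> *\<^sub>R d3)"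
    using pa pb pc pd unfolding G_def pert_def by (simp add: algebra_simps)
  moreover have "G (c1 - \<epsilon> *\<^sub>R d1) (c2 - \<epsilon> *\<^sub>R d2) (c3 - \<epsilon> *\<^sub>R d3)"
    using pa pb pc pd unfolding G_def pert_def by (simp add: algebra_simps)
  moreover have "\<epsilon> *\<^sub>R d1 \<noteq> 0 \<or> \<epsilon> *\<^sub>R d2 \<noteq> 0 \<or> \<epsilon> *\<^sub>R d3 \<noteq> 0" using nz e0 by auto
  ultimately show ?thesis unfolding NE_def by blast
qed

lemma L2:
  fixes w1 w2 w3 :: real
  assumes G: "G c1 c2 c3" and y: "y \<noteq> 0" and w: "w1 \<noteq> 0 \<or> w2 \<noteq> 0 \<or> w3 \<noteq> 0"
    and ca: "N (c1 + c2 + c3) < 1 \<or> w1 + w2 + w3 = 0 \<or> pert (c1 + c2 + c3) y"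
    and cb: "N (c1 + c2 - c3) < 1 \<or> w1 + w2 - w3 = 0 \<or> pert (c1 + c2 - c3) y"
    and cc: "N (c1 - c2 + c3) < 1 \<or> w1 - w2 + w3 = 0 \<or> pert (c1 - c2 + c3) y"
    and cd: "N (- c1 + c2 + c3) < 1 \<or> - w1 + w2 + w3 = 0 \<or> pert (- c1 + c2 + c3) y"
  shows "NE c1 c2 c3"
proof (rule NE_okp[of "w1 *\<^sub>R y" "w2 *\<^sub>R y" "w3 *\<^sub>R y"])
  note g = G8[OF G]
  have ok: "okp p (r *\<^sub>R y)" if "N p < 1 \<or> r = 0 \<or> pert p y" "N p \<le> 1" for p r
    using that okp_lt okp_0 okp_pert by fastforce
  show "w1 *\<^sub>R y \<noteq> 0 \<or> w2 *\<^sub>R y \<noteq> 0 \<or> w3 *\<^sub>R y \<noteq> 0" using w y by auto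
  show "okp (c1 + c2 + c3) (w1 *\<^sub>R y + w2 *\<^sub>R y + w3 *\<^sub>R y)"
    using ok[OF ca g(1)] by (simp add: algebra_simps)
  show "okp (c1 + c2 - c3) (w1 *\<^sub>R y + w2 *\<^sub>R y - w3 *\<^sub>R y)"
    using ok[OF cb g(2)] by (simp add: algebra_simps)
  show "okp (c1 - c2 + c3) (w1 *\<^sub>R y - w2 *\<^sub>R y + w3 *\<^sub>R y)"
    using ok[OF cc g(3)] by (simp add: algebra_simps)
  show "okp (- c1 + c2 + c3) (- (w1 *\<^sub>R y) + w2 *\<^sub>R y + w3 *\<^sub>R y)"
    using ok[OF cd g(4)] by (simp add: algebra_simps)
qed

definition okc :: "real^2 \<Rightarrow> real^2 \<Rightarrow> bool" where
  "okc X y \<longleftrightarrow> N X < 1 \<or> pert X y"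

lemma KillPair:
  assumes G: "G c1 c2 c3" and y: "y \<noteq> 0"
    and h: "(okc (c1 + c2 + c3) y \<and> okc (c1 + c2 - c3) y) \<or>
            (okc (c1 + c2 + c3) y \<and> okc (c1 - c2 + c3) y) \<or>
            (okc (c1 + c2 + c3) y \<and> okc (- c1 + c2 + c3) y) \<or>
            (okc (c1 + c2 - c3) y \<and> okc (c1 - c2 + c3) y) \<or>
            (okc (c1 + c2 - c3) y \<and> okc (- c1 + c2 + c3) y) \<or>
            (okc (c1 - c2 + c3) y \<and> okc (- c1 + c2 + c3) y)"
  shows "NE c1 c2 c3"
  using h
proof (elim disjE conjE)
  assume a: "okc (c1 + c2 + c3) y" "okc (c1 + c2 - c3) y"
  show ?thesis by (rule L2[OF G y, of 1 1 0]) (use a in \<open>auto simp: okc_def\<close>)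
next
  assume a: "okc (c1 + c2 + c3) y" "okc (c1 - c2 + c3) y"
  show ?thesis by (rule L2[OF G y, of 1 0 1]) (use a in \<open>auto simp: okc_def\<close>)
next
  assume a: "okc (c1 + c2 + c3) y" "okc (- c1 + c2 + c3) y"
  show ?thesis by (rule L2[OF G y, of 0 1 1]) (use a in \<open>auto simp: okc_def\<close>)
next
  assume a: "okc (c1 + c2 - c3) y" "okc (c1 - c2 + c3) y"
  show ?thesis by (rule L2[OF G y, of 0 1 "-1"]) (use a in \<open>auto simp: okc_def\<close>)
next
  assume a: "okc (c1 + c2 - c3) y" "okc (- c1 + c2 + c3) y"
  show ?thesis by (rule L2[OF G y, of 1 0 "-1"]) (use a in \<open>auto simp: okc_def\<close>)
next
  assume a: "okc (c1 - c2 + c3) y" "okc (- c1 + c2 + c3) y"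
  show ?thesis by (rule L2[OF G y, of 1 "-1" 0]) (use a in \<open>auto simp: okc_def\<close>)
qed

lemma Between:
  assumes "N (M *\<^sub>R z + w) \<le> 1" "N (- (M *\<^sub>R z) + w) \<le> 1" "M > 0" "\<bar>k\<bar> \<le> M"
  shows "pert (k *\<^sub>R z + w) ((M - \<bar>k\<bar>) *\<^sub>R z)"
proof -
  have gen: "N (k' *\<^sub>R z + w) \<le> 1" if "\<bar>k'\<bar> \<le> M" for k'
  proof -
    have e: "k' *\<^sub>R z = (k' / M) *\<^sub>R (M *\<^sub>R z)" using assms(3) by simp
    have "\<bar>k' / M\<bar> \<le> 1" using that assms(3) by (simp add: abs_divide field_simps)
    from Nline[OF assms(1,2) this] show ?thesis unfolding e[symmetric] .
  qed
  have a1: "\<bar>k + (M - \<bar>k\<bar>)\<bar> \<le> M" using assms(4) by linarith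
  have a2: "\<bar>k - (M - \<bar>k\<bar>)\<bar> \<le> M" using assms(4) by linarith
  have e1: "k *\<^sub>R z + w + (M - \<bar>k\<bar>) *\<^sub>R z = (k + (M - \<bar>k\<bar>)) *\<^sub>R z + w"
    by (simp add: scaleR_add_left)
  have e2: "k *\<^sub>R z + w - (M - \<bar>k\<bar>) *\<^sub>R z = (k - (M - \<bar>k\<bar>)) *\<^sub>R z + w"
    by (simp add: scaleR_diff_left)
  show ?thesis unfolding pert_def e1 e2 using gen[OF a1] gen[OF a2] by blast
qed

lemma ZeroLem:
  assumes G: "G c1 c2 0" and y: "y \<noteq> 0" and p: "pert (c1 + c2) y \<or> pert (c1 - c2) y"
  shows "NE c1 c2 0"
  using p
proof
  assume a: "pert (c1 + c2) y"
  show ?thesis by (rule L2[OF G y, of 1 1 0]) (use a in auto)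
next
  assume a: "pert (c1 - c2) y"
  have b: "pert (- c1 + c2) y" using a pert_negp[of "c1 - c2" y] by simp
  show ?thesis by (rule L2[OF G y, of 1 "-1" 0]) (use a b in auto)
qed

lemma PropLem:
  assumes G: "G c1 c2 c3" and c2: "c2 = mu *\<^sub>R c1" and c1: "c1 \<noteq> 0" and mu: "mu \<noteq> 0"
  shows "NE c1 c2 c3"
proof -
  note g = G8[OF G]
  have eA: "c1 + c2 + c3 = (1 + mu) *\<^sub>R c1 + c3" unfolding c2 by (simp add: scaleR_add_left scaleR_diff_left algebra_simps)
  have eB: "c1 + c2 - c3 = (1 + mu) *\<^sub>R c1 + - c3" unfolding c2 by (simp add: scaleR_add_left scaleR_diff_left algebra_simps)
  have eC: "c1 - c2 + c3 = (1 - mu) *\<^sub>R c1 + c3" unfolding c2 by (simp add: scaleR_add_left scaleR_diff_left algebra_simps)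
  have eD: "- c1 + c2 + c3 = (mu - 1) *\<^sub>R c1 + c3" unfolding c2 by (simp add: scaleR_add_left scaleR_diff_left algebra_simps)
  have eB': "- c1 - c2 + c3 = - ((1 + mu) *\<^sub>R c1) + c3" unfolding c2 by (simp add: scaleR_add_left scaleR_diff_left algebra_simps)
  have eD': "c1 - c2 - c3 = (1 - mu) *\<^sub>R c1 + - c3" unfolding c2 by (simp add: scaleR_add_left scaleR_diff_left algebra_simps)
  have eC': "- c1 + c2 - c3 = - ((1 - mu) *\<^sub>R c1) + - c3" unfolding c2 by (simp add: scaleR_add_left scaleR_diff_left algebra_simps)
  have eD'': "- c1 + c2 + c3 = - ((1 - mu) *\<^sub>R c1) + c3" unfolding c2 by (simp add: scaleR_add_left scaleR_diff_left algebra_simps)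
  have fA: "N ((1 + mu) *\<^sub>R c1 + c3) \<le> 1" using g(1) unfolding eA .
  have fB': "N (- ((1 + mu) *\<^sub>R c1) + c3) \<le> 1" using g(6) unfolding eB' .
  have fC: "N ((1 - mu) *\<^sub>R c1 + c3) \<le> 1" using g(3) unfolding eC .
  have fD'': "N (- ((1 - mu) *\<^sub>R c1) + c3) \<le> 1" using g(4) unfolding eD'' .
  have fD': "N ((1 - mu) *\<^sub>R c1 + - c3) \<le> 1" using g(8) unfolding eD' .
  have fC': "N (- ((1 - mu) *\<^sub>R c1) + - c3) \<le> 1" using g(7) unfolding eC' .
  show ?thesis
  proof (cases "mu > 0")
    case True
    define m where "m = (1 + mu) - \<bar>1 - mu\<bar>"
    have m0: "m > 0" unfolding m_def using True by arith
    have y: "m *\<^sub>R c1 \<noteq> 0" using m0 c1 by simp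
    have "pert ((1 - mu) *\<^sub>R c1 + c3) (((1 + mu) - \<bar>1 - mu\<bar>) *\<^sub>R c1)"
      by (rule Between[OF fA fB']) (use True in arith)+
    then have pC: "pert (c1 - c2 + c3) (m *\<^sub>R c1)" unfolding eC m_def .
    have "pert ((mu - 1) *\<^sub>R c1 + c3) (((1 + mu) - \<bar>mu - 1\<bar>) *\<^sub>R c1)"
      by (rule Between[OF fA fB']) (use True in arith)+
    moreover have "\<bar>mu - 1\<bar> = \<bar>1 - mu\<bar>" by arith
    ultimately have pD: "pert (- c1 + c2 + c3) (m *\<^sub>R c1)" unfolding eD m_def by simp
    show ?thesis by (rule L2[OF G y, of 1 "-1" 0]) (use pC pD in auto)
  next
    case False
    then have neg: "mu < 0" using mu by arith
    define m where "m = (1 - mu) - \<bar>1 + mu\<bar>"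
    have m0: "m > 0" unfolding m_def using neg by arith
    have y: "m *\<^sub>R c1 \<noteq> 0" using m0 c1 by simp
    have "pert ((1 + mu) *\<^sub>R c1 + c3) (((1 - mu) - \<bar>1 + mu\<bar>) *\<^sub>R c1)"
      by (rule Between[OF fC fD'']) (use neg in arith)+
    then have pA: "pert (c1 + c2 + c3) (m *\<^sub>R c1)" unfolding eA m_def .
    have "pert ((1 + mu) *\<^sub>R c1 + - c3) (((1 - mu) - \<bar>1 + mu\<bar>) *\<^sub>R c1)"
      by (rule Between[OF fD' fC']) (use neg in arith)+
    then have pB: "pert (c1 + c2 - c3) (m *\<^sub>R c1)" unfolding eB m_def .
    show ?thesis by (rule L2[OF G y, of 1 1 0]) (use pA pB in auto)
  qed
qed

lemma G_sw12: "G c2 c1 c3 \<longleftrightarrow> G c1 c2 c3"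
  unfolding G_def by (auto simp: algebra_simps)
lemma G_sw23: "G c1 c3 c2 \<longleftrightarrow> G c1 c2 c3"
  unfolding G_def by (auto simp: algebra_simps)

lemma NE_sw12': "NE c1 c2 c3 \<Longrightarrow> NE c2 c1 c3"
  unfolding NE_def using G_sw12 by blast
lemma NE_sw23': "NE c1 c2 c3 \<Longrightarrow> NE c1 c3 c2"
  unfolding NE_def using G_sw23 by blast
lemma NE_sw12: "NE c2 c1 c3 \<longleftrightarrow> NE c1 c2 c3" using NE_sw12' by blast
lemma NE_sw23: "NE c1 c3 c2 \<longleftrightarrow> NE c1 c2 c3" using NE_sw23' by blast

lemma lin_div: "(l1 / L) *\<^sub>R c1 + (l2 / L) *\<^sub>R c2 + (l3 / L) *\<^sub>R c3 = (1 / L) *\<^sub>R (l1 *\<^sub>R c1 + l2 *\<^sub>R c2 + l3 *\<^sub>R (c3::real^2))"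
  by (simp add: scaleR_add_right)
lemma lin_mul: "r \<noteq> 0 \<Longrightarrow> r *\<^sub>R ((x1 / r) *\<^sub>R c1 + (x2 / r) *\<^sub>R c2 + (x3 / r) *\<^sub>R c3) = x1 *\<^sub>R c1 + x2 *\<^sub>R c2 + x3 *\<^sub>R (c3::real^2)"
  by (simp add: scaleR_add_right)
lemma lin_diff: "(a1 - b1) *\<^sub>R c1 + (a2 - b2) *\<^sub>R c2 + (a3 - b3) *\<^sub>R c3 = (a1 *\<^sub>R c1 + a2 *\<^sub>R c2 + a3 *\<^sub>R c3) - (b1 *\<^sub>R c1 + b2 *\<^sub>R c2 + b3 *\<^sub>R (c3::real^2))"
  by (simp add: algebra_simps)

lemma ZC:
  assumes G: "G c1 c2 c3" and rel: "l1 *\<^sub>R c1 + l2 *\<^sub>R c2 + l3 *\<^sub>R c3 = 0"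
    and nz: "l1 \<noteq> 0" "l2 \<noteq> 0" "l3 \<noteq> 0"
  shows "N (sgn l1 *\<^sub>R c1 + sgn l2 *\<^sub>R c2 + sgn l3 *\<^sub>R c3) < 1"
proof -
  define L where "L = \<bar>l1\<bar> + \<bar>l2\<bar> + \<bar>l3\<bar>"
  define mn where "mn = min (min \<bar>l1\<bar> \<bar>l2\<bar>) \<bar>l3\<bar>"
  define r where "r = 1 - mn / L"
  have L0: "L > 0" unfolding L_def using nz by auto
  have mn0: "mn > 0" unfolding mn_def using nz by auto
  have mnL: "mn < L"
  proof -
    have "mn \<le> \<bar>l1\<bar>" unfolding mn_def by simp
    moreover have "\<bar>l2\<bar> > 0" "\<bar>l3\<bar> > 0" using nz by auto
    ultimately show ?thesis unfolding L_def by linarith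
  qed
  have r0: "0 < r" "r < 1" unfolding r_def using L0 mn0 mnL by (auto simp: field_simps)
  have kb: "\<bar>sgn l - l / L\<bar> \<le> r" if "l \<noteq> 0" "mn \<le> \<bar>l\<bar>" "\<bar>l\<bar> \<le> L" for l
  proof -
    have q: "\<bar>l\<bar> / L \<le> 1" using that L0 by (simp add: divide_le_eq_1)
    have m: "mn / L \<le> \<bar>l\<bar> / L" using that L0 by (simp add: divide_right_mono)
    have "\<bar>sgn l - l / L\<bar> = 1 - \<bar>l\<bar> / L"
    proof (cases "l > 0")
      case True
      then have "sgn l - l / L = 1 - \<bar>l\<bar> / L" by simp
      then show ?thesis using q by simp
    next
      case False
      then have "l < 0" using that by arith
      then have "sgn l - l / L = - (1 - \<bar>l\<bar> / L)" by simp
      then show ?thesis using q by simp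
    qed
    then show ?thesis unfolding r_def using m by linarith
  qed
  have mnl: "mn \<le> \<bar>l1\<bar>" "mn \<le> \<bar>l2\<bar>" "mn \<le> \<bar>l3\<bar>" unfolding mn_def by auto
  have lL: "\<bar>l1\<bar> \<le> L" "\<bar>l2\<bar> \<le> L" "\<bar>l3\<bar> \<le> L" unfolding L_def by auto
  have k1: "\<bar>sgn l1 - l1 / L\<bar> \<le> r" by (rule kb[OF nz(1) mnl(1) lL(1)])
  have k2: "\<bar>sgn l2 - l2 / L\<bar> \<le> r" by (rule kb[OF nz(2) mnl(2) lL(2)])
  have k3: "\<bar>sgn l3 - l3 / L\<bar> \<le> r" by (rule kb[OF nz(3) mnl(3) lL(3)])
  have eq: "sgn l1 *\<^sub>R c1 + sgn l2 *\<^sub>R c2 + sgn l3 *\<^sub>R c3 =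
      r *\<^sub>R (((sgn l1 - l1 / L) / r) *\<^sub>R c1 + ((sgn l2 - l2 / L) / r) *\<^sub>R c2 + ((sgn l3 - l3 / L) / r) *\<^sub>R c3)"
  proof -
    have z: "(l1 / L) *\<^sub>R c1 + (l2 / L) *\<^sub>R c2 + (l3 / L) *\<^sub>R c3 = 0"
      using lin_div[of l1 L c1 l2 c2 l3 c3] rel by simp
    have "r *\<^sub>R (((sgn l1 - l1 / L) / r) *\<^sub>R c1 + ((sgn l2 - l2 / L) / r) *\<^sub>R c2 + ((sgn l3 - l3 / L) / r) *\<^sub>R c3)
        = (sgn l1 - l1 / L) *\<^sub>R c1 + (sgn l2 - l2 / L) *\<^sub>R c2 + (sgn l3 - l3 / L) *\<^sub>R c3"
      by (rule lin_mul) (use r0 in simp)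
    also have "\<dots> = sgn l1 *\<^sub>R c1 + sgn l2 *\<^sub>R c2 + sgn l3 *\<^sub>R c3 - ((l1 / L) *\<^sub>R c1 + (l2 / L) *\<^sub>R c2 + (l3 / L) *\<^sub>R c3)"
      by (rule lin_diff)
    finally have "r *\<^sub>R (((sgn l1 - l1 / L) / r) *\<^sub>R c1 + ((sgn l2 - l2 / L) / r) *\<^sub>R c2 + ((sgn l3 - l3 / L) / r) *\<^sub>R c3)
       = sgn l1 *\<^sub>R c1 + sgn l2 *\<^sub>R c2 + sgn l3 *\<^sub>R c3" by (simp only: z diff_zero)
    then show ?thesis by (rule sym)
  qed
  define X where "X = ((sgn l1 - l1 / L) / r) *\<^sub>R c1 + ((sgn l2 - l2 / L) / r) *\<^sub>R c2 + ((sgn l3 - l3 / L) / r) *\<^sub>R c3"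
  have "\<bar>(sgn l1 - l1 / L) / r\<bar> \<le> 1" using k1 r0 by (simp add: divide_le_eq_1)
  moreover have "\<bar>(sgn l2 - l2 / L) / r\<bar> \<le> 1" using k2 r0 by (simp add: divide_le_eq_1)
  moreover have "\<bar>(sgn l3 - l3 / L) / r\<bar> \<le> 1" using k3 r0 by (simp add: divide_le_eq_1)
  ultimately have X1: "N X \<le> 1" unfolding X_def by (rule cube[OF G])
  have "N (sgn l1 *\<^sub>R c1 + sgn l2 *\<^sub>R c2 + sgn l3 *\<^sub>R c3) = N (r *\<^sub>R X)"
    unfolding X_def using eq by (rule arg_cong)
  also have "\<dots> = r * N X" using r0 by (simp add: Nscale)
  also have "\<dots> \<le> r * 1" using X1 r0 by (intro mult_left_mono) auto
  finally show ?thesis using r0 by simp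
qed

definition det2 :: "real^2 \<Rightarrow> real^2 \<Rightarrow> real" where
  "det2 u v = u$1 * v$2 - u$2 * v$1"

lemma det_ident: "det2 c2 c3 *\<^sub>R c1 + (- det2 c1 c3) *\<^sub>R c2 + det2 c1 c2 *\<^sub>R c3 = 0"
  unfolding det2_def by (simp add: vec_eq_iff forall_2 algebra_simps)

lemma DetLem: assumes "det2 u v = 0" "u \<noteq> 0" shows "\<exists>mu. v = mu *\<^sub>R u"
proof -
  have "u$1 \<noteq> 0 \<or> u$2 \<noteq> 0" using assms(2) by (auto simp: vec_eq_iff forall_2)
  then show ?thesis
  proof
    assume h: "u$1 \<noteq> 0"
    have "v = (v$1 / u$1) *\<^sub>R u" using h assms(1) unfolding det2_def
      by (auto simp: vec_eq_iff forall_2 field_simps)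
    then show ?thesis by blast
  next
    assume h: "u$2 \<noteq> 0"
    have "v = (v$2 / u$2) *\<^sub>R u" using h assms(1) unfolding det2_def
      by (auto simp: vec_eq_iff forall_2 field_simps)
    then show ?thesis by blast
  qed
qed

lemma allT:
  assumes "N (c1 + c2 + c3) = 1" "N (c1 + c2 - c3) = 1" "N (c1 - c2 + c3) = 1" "N (- c1 + c2 + c3) = 1"
    "s1 = 1 \<or> s1 = -1" "s2 = 1 \<or> s2 = -1" "s3 = 1 \<or> s3 = -1"
  shows "N (s1 *\<^sub>R c1 + s2 *\<^sub>R c2 + s3 *\<^sub>R c3) = 1"
proof -
  have n: "N x = 1" if "x = c1 + c2 + c3 \<or> x = - (c1 + c2 + c3) \<or> x = c1 + c2 - c3 \<or> x = - (c1 + c2 - c3)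
     \<or> x = c1 - c2 + c3 \<or> x = - (c1 - c2 + c3) \<or> x = - c1 + c2 + c3 \<or> x = - (- c1 + c2 + c3)" for x
    using that by (elim disjE; hypsubst; simp only: Nneg assms(1-4))
  show ?thesis by (rule n) (use assms(5-7) in \<open>auto simp: algebra_simps\<close>)
qed

lemma FourT:
  assumes G: "G c1 c2 c3"
    and t: "N (c1 + c2 + c3) = 1" "N (c1 + c2 - c3) = 1" "N (c1 - c2 + c3) = 1" "N (- c1 + c2 + c3) = 1"
    and y: "y \<noteq> 0"
    and p: "pert (c1 + c2 + c3) y \<or> pert (c1 + c2 - c3) y \<or> pert (c1 - c2 + c3) y \<or> pert (- c1 + c2 + c3) y"
  shows "NE c1 c2 c3"
proof -
  have zero: "NE c1 c2 c3" if "c1 = 0 \<or> c2 = 0 \<or> c3 = 0"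
    using that
  proof (elim disjE)
    assume h: "c1 = 0"
    have e: "c1 + c2 + c3 = c2 + c3" "c1 + c2 - c3 = c2 - c3" "c1 - c2 + c3 = - (c2 - c3)" "- c1 + c2 + c3 = c2 + c3"
      using h by simp_all
    have pp: "pert (c2 + c3) y \<or> pert (c2 - c3) y" using p unfolding e pert_negp by blast
    have G': "G c2 c3 0" using G h G_sw12[of c2 c1 c3] G_sw23[of c2 c3 c1] by simp
    have "NE c2 c3 0" by (rule ZeroLem[OF G' y pp])
    then have "NE c2 c3 c1" using h by simp
    then show ?thesis using NE_sw23[of c2 c1 c3] NE_sw12[of c1 c2 c3] by simp
  next
    assume h: "c2 = 0"
    have e: "c1 + c2 + c3 = c1 + c3" "c1 + c2 - c3 = c1 - c3" "c1 - c2 + c3 = c1 + c3" "- c1 + c2 + c3 = - (c1 - c3)"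
      using h by simp_all
    have pp: "pert (c1 + c3) y \<or> pert (c1 - c3) y" using p unfolding e pert_negp by blast
    have G': "G c1 c3 0" using G h G_sw23[of c1 c3 c2] by simp
    have "NE c1 c3 0" by (rule ZeroLem[OF G' y pp])
    then have "NE c1 c3 c2" using h by simp
    then show ?thesis using NE_sw23[of c1 c2 c3] by simp
  next
    assume h: "c3 = 0"
    have e: "c1 + c2 + c3 = c1 + c2" "c1 + c2 - c3 = c1 + c2" "c1 - c2 + c3 = c1 - c2" "- c1 + c2 + c3 = - (c1 - c2)"
      using h by simp_all
    have pp: "pert (c1 + c2) y \<or> pert (c1 - c2) y" using p unfolding e pert_negp by blast
    have G': "G c1 c2 0" using G h by simp
    have "NE c1 c2 0" by (rule ZeroLem[OF G' y pp])
    then show ?thesis using h by simp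
  qed
  consider "det2 c2 c3 \<noteq> 0 \<and> - det2 c1 c3 \<noteq> 0 \<and> det2 c1 c2 \<noteq> 0" | "det2 c1 c2 = 0" | "det2 c1 c3 = 0" | "det2 c2 c3 = 0"
    by force
  then show ?thesis
  proof cases
    case 1
    have "N (sgn (det2 c2 c3) *\<^sub>R c1 + sgn (- det2 c1 c3) *\<^sub>R c2 + sgn (det2 c1 c2) *\<^sub>R c3) < 1"
      by (rule ZC[OF G det_ident]) (use 1 in auto)
    moreover have "N (sgn (det2 c2 c3) *\<^sub>R c1 + sgn (- det2 c1 c3) *\<^sub>R c2 + sgn (det2 c1 c2) *\<^sub>R c3) = 1"
      by (rule allT[OF t]) (use 1 in \<open>auto simp: sgn_if\<close>)
    ultimately show ?thesis by simp
  next
    case 2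
    show ?thesis
    proof (cases "c1 = 0")
      case True then show ?thesis using zero by blast
    next
      case False
      then obtain mu where mu: "c2 = mu *\<^sub>R c1" using DetLem[OF 2] by blast
      show ?thesis
      proof (cases "mu = 0")
        case True then show ?thesis using zero mu by simp
      next
        case False then show ?thesis using PropLem[OF G mu \<open>c1 \<noteq> 0\<close>] by blast
      qed
    qed
  next
    case 3
    show ?thesis
    proof (cases "c1 = 0")
      case True then show ?thesis using zero by blast
    next
      case False
      then obtain mu where mu: "c3 = mu *\<^sub>R c1" using DetLem[OF 3] by blast
      show ?thesis
      proof (cases "mu = 0")
        case True then show ?thesis using zero mu by simp
      next
        case False
        have G': "G c1 c3 c2" using G G_sw23 by simp
        have "NE c1 c3 c2" using PropLem[OF G' mu \<open>c1 \<noteq> 0\<close> False] .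
        then show ?thesis using NE_sw23 by simp
      qed
    qed
  next
    case 4
    show ?thesis
    proof (cases "c2 = 0")
      case True then show ?thesis using zero by blast
    next
      case False
      then obtain mu where mu: "c3 = mu *\<^sub>R c2" using DetLem[OF 4] by blast
      show ?thesis
      proof (cases "mu = 0")
        case True then show ?thesis using zero mu by simp
      next
        case False
        have G': "G c2 c3 c1" using G G_sw12[of c2 c1 c3] G_sw23[of c2 c3 c1] by simp
        have "NE c2 c3 c1" using PropLem[OF G' mu \<open>c2 \<noteq> 0\<close> False] .
        then show ?thesis using NE_sw23[of c2 c1 c3] NE_sw12[of c1 c2 c3] by simp
      qed
    qed
  qed
qed

lemma NotExt:
  assumes "N X \<le> 1" "\<not> X extreme_point_of unit_ball N"
  shows "\<exists>y. y \<noteq> 0 \<and> pert X y"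
proof -
  have "X \<in> unit_ball N" using assms(1) by (simp add: unit_ball_def)
  then obtain a b where ab: "a \<in> unit_ball N" "b \<in> unit_ball N" "X \<in> open_segment a b"
    using assms(2) unfolding extreme_point_of_def by blast
  then obtain u where u: "a \<noteq> b" "0 < u" "u < 1" "X = (1 - u) *\<^sub>R a + u *\<^sub>R b"
    by (auto simp: in_segment)
  have Na: "N a \<le> 1" and Nb: "N b \<le> 1" using ab by (auto simp: unit_ball_def)
  define m where "m = min u (1 - u)"
  have m0: "m > 0" "m \<le> u" "m \<le> 1 - u" using u unfolding m_def by auto
  define y where "y = m *\<^sub>R (b - a)"
  have y0: "y \<noteq> 0" using m0 u unfolding y_def by auto
  have e1: "X + y = (1 - u - m) *\<^sub>R a + (1 - (1 - u - m)) *\<^sub>R b"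
    unfolding u(4) y_def by (simp add: algebra_simps)
  have e2: "X - y = (1 - u + m) *\<^sub>R a + (1 - (1 - u + m)) *\<^sub>R b"
    unfolding u(4) y_def by (simp add: algebra_simps)
  have "N (X + y) \<le> 1" unfolding e1 by (rule Nconv[OF Na Nb]) (use m0 in auto)
  moreover have "N (X - y) \<le> 1" unfolding e2 by (rule Nconv[OF Na Nb]) (use m0 u in auto)
  ultimately show ?thesis using y0 unfolding pert_def by blast
qed

lemma HD2:
  assumes G: "G c1 c2 c3" and y: "y \<noteq> 0"
    and p: "(N (c1 + c2 + c3) = 1 \<and> pert (c1 + c2 + c3) y) \<or> (N (c1 + c2 - c3) = 1 \<and> pert (c1 + c2 - c3) y) \<or>
            (N (c1 - c2 + c3) = 1 \<and> pert (c1 - c2 + c3) y) \<or> (N (- c1 + c2 + c3) = 1 \<and> pert (- c1 + c2 + c3) y)"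
  shows "NE c1 c2 c3"
proof (cases "N (c1 + c2 + c3) = 1 \<and> N (c1 + c2 - c3) = 1 \<and> N (c1 - c2 + c3) = 1 \<and> N (- c1 + c2 + c3) = 1")
  case True
  then show ?thesis using FourT[OF G _ _ _ _ y] p by blast
next
  case False
  note g = G8[OF G]
  have "N (c1 + c2 + c3) < 1 \<or> N (c1 + c2 - c3) < 1 \<or> N (c1 - c2 + c3) < 1 \<or> N (- c1 + c2 + c3) < 1"
    using False g(1-4) by (simp add: less_le)
  then show ?thesis using p by (intro KillPair[OF G y]) (auto simp: okc_def)
qed

lemma HD:
  assumes G: "G c1 c2 c3" and nNE: "\<not> NE c1 c2 c3"
  shows "(N (c1 + c2 + c3) = 1 \<and> N (c1 + c2 - c3) = 1 \<and> N (c1 - c2 + c3) = 1) \<or>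
         (N (c1 + c2 + c3) = 1 \<and> N (c1 + c2 - c3) = 1 \<and> N (- c1 + c2 + c3) = 1) \<or>
         (N (c1 + c2 + c3) = 1 \<and> N (c1 - c2 + c3) = 1 \<and> N (- c1 + c2 + c3) = 1) \<or>
         (N (c1 + c2 - c3) = 1 \<and> N (c1 - c2 + c3) = 1 \<and> N (- c1 + c2 + c3) = 1)" (is ?P1)
    and "\<forall>X \<in> {c1 + c2 + c3, c1 + c2 - c3, c1 - c2 + c3, - c1 + c2 + c3}.
           N X = 1 \<longrightarrow> X extreme_point_of unit_ball N" (is ?P2)
proof -
  note g = G8[OF G]
  show ?P1
  proof (rule ccontr)
    assume na: "\<not> ?P1"
    have y0: "(axis 1 1 :: real^2) \<noteq> 0" by simp
    have lt: "N X \<noteq> 1 \<Longrightarrow> N X \<le> 1 \<Longrightarrow> okc X (axis 1 1)" for X by (simp add: okc_def)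
    have "NE c1 c2 c3"
      by (rule KillPair[OF G y0]) (use na g(1-4) lt in \<open>auto simp: okc_def less_le\<close>)
    then show False using nNE by blast
  qed
  show ?P2
  proof (intro ballI impI)
    fix X assume X: "X \<in> {c1 + c2 + c3, c1 + c2 - c3, c1 - c2 + c3, - c1 + c2 + c3}" and t: "N X = 1"
    show "X extreme_point_of unit_ball N"
    proof (rule ccontr)
      assume ne: "\<not> X extreme_point_of unit_ball N"
      obtain y where y: "y \<noteq> 0" "pert X y" using NotExt[OF _ ne] t by auto
      have "NE c1 c2 c3" by (rule HD2[OF G y(1)]) (use X t y(2) in auto)
      then show False using nNE by blast
    qed
  qed
qed

lemma ext_neg: assumes "X extreme_point_of unit_ball N" shows "(- X) extreme_point_of unit_ball N"
proof -
  have X: "N X \<le> 1" using assms unfolding extreme_point_of_def unit_ball_def by auto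
  show ?thesis unfolding extreme_point_of_def
  proof (intro conjI ballI)
    show "- X \<in> unit_ball N" using X by (simp add: unit_ball_def)
    fix a b assume ab: "a \<in> unit_ball N" "b \<in> unit_ball N"
    show "- X \<notin> open_segment a b"
    proof
      assume "- X \<in> open_segment a b"
      then obtain u where u: "a \<noteq> b" "0 < u" "u < 1" "- X = (1 - u) *\<^sub>R a + u *\<^sub>R b"
        by (auto simp: in_segment)
      have "X = (1 - u) *\<^sub>R (- a) + u *\<^sub>R (- b)" using u(4) by (simp add: minus_equation_iff[of X])
      then have "X \<in> open_segment (- a) (- b)" using u by (auto simp: in_segment)
      moreover have "- a \<in> unit_ball N" "- b \<in> unit_ball N" using ab by (auto simp: unit_ball_def)
      ultimately show False using assms unfolding extreme_point_of_def by blast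
    qed
  qed
qed

lemma seg_eq:
  assumes "X extreme_point_of unit_ball N" "N p \<le> 1" "N q \<le> 1" "X = (1 - u) *\<^sub>R p + u *\<^sub>R q" "0 < u" "u < 1"
  shows "p = q"
proof (rule ccontr)
  assume "p \<noteq> q"
  then have "X \<in> open_segment p q" using assms by (auto simp: in_segment)
  moreover have "p \<in> unit_ball N" "q \<in> unit_ball N" using assms by (auto simp: unit_ball_def)
  ultimately show False using assms(1) unfolding extreme_point_of_def by blast
qed

lemma OPN: "op_norm N B \<le> 1 \<longleftrightarrow> G (column 1 B) (column 2 B) (column 3 B)"
proof -
  define S where "S = {N (B *v x) | x. infnorm x \<le> 1}"
  have "infnorm (0::real^3) \<le> 1" by (simp add: infnorm_le1)
  then have ne: "S \<noteq> {}" unfolding S_def by blast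
  have bd: "z \<le> N (column 1 B) + N (column 2 B) + N (column 3 B)" if zS: "z \<in> S" for z
  proof -
    obtain x where x: "z = N (B *v x)" "infnorm x \<le> 1" using zS unfolding S_def by blast
    have xi: "\<bar>x$i\<bar> \<le> 1" for i using x(2) component_le_infnorm_cart[of x i] by linarith
    have "N (B *v x) \<le> N (x$1 *\<^sub>R column 1 B + x$2 *\<^sub>R column 2 B) + N (x$3 *\<^sub>R column 3 B)"
      unfolding MV by (rule Ntri)
    also have "\<dots> \<le> N (x$1 *\<^sub>R column 1 B) + N (x$2 *\<^sub>R column 2 B) + N (x$3 *\<^sub>R column 3 B)"
      using Ntri by simp
    also have "\<dots> = \<bar>x$1\<bar> * N (column 1 B) + \<bar>x$2\<bar> * N (column 2 B) + \<bar>x$3\<bar> * N (column 3 B)"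
      by (simp add: Nscale)
    also have "\<dots> \<le> 1 * N (column 1 B) + 1 * N (column 2 B) + 1 * N (column 3 B)"
      using xi Nnonneg by (intro add_mono mult_right_mono) auto
    finally show ?thesis using x by simp
  qed
  have bdd: "bdd_above S" using bd by (rule bdd_aboveI)
  show ?thesis
  proof
    assume h: "op_norm N B \<le> 1"
    have v: "N (B *v v) \<le> 1" if "\<forall>i. \<bar>v$i\<bar> \<le> 1" for v
    proof -
      have "infnorm v \<le> 1" using that by (simp add: infnorm_le1)
      then have "N (B *v v) \<in> S" unfolding S_def by blast
      then have "N (B *v v) \<le> Sup S" using bdd by (rule cSup_upper)
      then show ?thesis using h unfolding op_norm_def S_def by simp
    qed
    have 1: "N (B *v vector [1, 1, 1]) \<le> 1" by (rule v) (simp add: forall_3)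
    have 2: "N (B *v vector [1, 1, -1]) \<le> 1" by (rule v) (simp add: forall_3)
    have 3: "N (B *v vector [1, -1, 1]) \<le> 1" by (rule v) (simp add: forall_3)
    have 4: "N (B *v vector [-1, 1, 1]) \<le> 1" by (rule v) (simp add: forall_3)
    show "G (column 1 B) (column 2 B) (column 3 B)"
      using 1 2 3 4 unfolding G_def MV by simp
  next
    assume g: "G (column 1 B) (column 2 B) (column 3 B)"
    have "Sup S \<le> 1"
    proof (rule cSup_least[OF ne])
      fix z assume "z \<in> S"
      then obtain x where x: "z = N (B *v x)" "infnorm x \<le> 1" unfolding S_def by blast
      have xi: "\<bar>x$i\<bar> \<le> 1" for i using x(2) component_le_infnorm_cart[of x i] by linarith
      show "z \<le> 1" unfolding x MV by (rule cube[OF g xi xi xi])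
    qed
    then show "op_norm N B \<le> 1" unfolding op_norm_def S_def .
  qed
qed

lemma NE_notext:
  assumes "NE (column 1 T) (column 2 T) (column 3 T)"
  shows "\<not> T extreme_point_of {B. op_norm N B \<le> 1}"
proof
  assume ext: "T extreme_point_of {B. op_norm N B \<le> 1}"
  obtain d1 d2 d3 where d: "d1 \<noteq> 0 \<or> d2 \<noteq> 0 \<or> d3 \<noteq> 0"
    "G (column 1 T + d1) (column 2 T + d2) (column 3 T + d3)"
    "G (column 1 T - d1) (column 2 T - d2) (column 3 T - d3)"
    using assms unfolding NE_def by blast
  define V :: "(real^2)^3" where "V = vector [d1, d2, d3]"
  define D :: "real^3^2" where "D = (\<chi> j i. V $ i $ j)"
  have cD: "column 1 D = d1" "column 2 D = d2" "column 3 D = d3"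
    unfolding D_def V_def column_def by (simp_all add: vec_eq_iff)
  have cadd: "column i (T + D) = column i T + column i D" "column i (T - D) = column i T - column i D" for i
    by (simp_all add: column_def vec_eq_iff)
  have p: "op_norm N (T + D) \<le> 1" unfolding OPN cadd cD using d(2) .
  have m: "op_norm N (T - D) \<le> 1" unfolding OPN cadd cD using d(3) .
  have ne: "T - D \<noteq> T + D"
  proof
    assume eq: "T - D = T + D"
    have "(2::real) *\<^sub>R D = (T + D) - (T - D)" by (simp add: scaleR_2)
    then have "(2::real) *\<^sub>R D = 0" using eq by simp
    then have "D = 0" by simp
    then show False using d(1) cD by (auto simp: column_def vec_eq_iff)
  qed
  have "midpoint (T - D) (T + D) = T" unfolding midpoint_eq_iff by (simp add: algebra_simps)
  then have "T \<in> open_segment (T - D) (T + D)" using ne midpoint_in_open_segment by metis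
  then show False using ext p m unfolding extreme_point_of_def by blast
qed

lemma RHSext:
  assumes opT: "op_norm N T \<le> 1"
    and c: "column 1 T = c1" "column 2 T = c2" "column 3 T = c3"
    and P1: "(N (c1 + c2 + c3) = 1 \<and> N (c1 + c2 - c3) = 1 \<and> N (c1 - c2 + c3) = 1) \<or>
         (N (c1 + c2 + c3) = 1 \<and> N (c1 + c2 - c3) = 1 \<and> N (- c1 + c2 + c3) = 1) \<or>
         (N (c1 + c2 + c3) = 1 \<and> N (c1 - c2 + c3) = 1 \<and> N (- c1 + c2 + c3) = 1) \<or>
         (N (c1 + c2 - c3) = 1 \<and> N (c1 - c2 + c3) = 1 \<and> N (- c1 + c2 + c3) = 1)"
    and P2: "\<forall>X \<in> {c1 + c2 + c3, c1 + c2 - c3, c1 - c2 + c3, - c1 + c2 + c3}.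
           N X = 1 \<longrightarrow> X extreme_point_of unit_ball N"
  shows "T extreme_point_of {B. op_norm N B \<le> 1}"
  unfolding extreme_point_of_def
proof (intro conjI ballI)
  show "T \<in> {B. op_norm N B \<le> 1}" using opT by simp
  fix A B assume A: "A \<in> {B. op_norm N B \<le> 1}" and B: "B \<in> {B. op_norm N B \<le> 1}"
  show "T \<notin> open_segment A B"
  proof
    assume "T \<in> open_segment A B"
    then obtain u where u: "A \<noteq> B" "0 < u" "u < 1" "T = (1 - u) *\<^sub>R A + u *\<^sub>R B"
      by (auto simp: in_segment)
    have GA: "G (column 1 A) (column 2 A) (column 3 A)" using A OPN by simp
    have GB: "G (column 1 B) (column 2 B) (column 3 B)" using B OPN by simp
    note gA = G8[OF GA] and gB = G8[OF GB]
    have cc: "c1 = (1 - u) *\<^sub>R column 1 A + u *\<^sub>R column 1 B"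
       "c2 = (1 - u) *\<^sub>R column 2 A + u *\<^sub>R column 2 B"
       "c3 = (1 - u) *\<^sub>R column 3 A + u *\<^sub>R column 3 B"
      using c u(4) column_lin by metis+
    note cm = comb[OF cc]
    have eA: "column 1 A + column 2 A + column 3 A = column 1 B + column 2 B + column 3 B" if "N (c1 + c2 + c3) = 1"
      by (rule seg_eq[OF _ gA(1) gB(1) cm(1) u(2,3)]) (use P2 that in auto)
    have eB: "column 1 A + column 2 A - column 3 A = column 1 B + column 2 B - column 3 B" if "N (c1 + c2 - c3) = 1"
      by (rule seg_eq[OF _ gA(2) gB(2) cm(2) u(2,3)]) (use P2 that in auto)
    have eC: "column 1 A - column 2 A + column 3 A = column 1 B - column 2 B + column 3 B" if "N (c1 - c2 + c3) = 1"
      by (rule seg_eq[OF _ gA(3) gB(3) cm(3) u(2,3)]) (use P2 that in auto)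
    have eD: "- column 1 A + column 2 A + column 3 A = - column 1 B + column 2 B + column 3 B" if "N (- c1 + c2 + c3) = 1"
      by (rule seg_eq[OF _ gA(4) gB(4) cm(4) u(2,3)]) (use P2 that in auto)
    have "column 1 A = column 1 B \<and> column 2 A = column 2 B \<and> column 3 A = column 3 B"
      by (rule cols3) (use P1 eA eB eC eD in blast)
    then have "A = B" using mat_eq_cols by blast
    then show False using u(1) by simp
  qed
qed

lemma extpm: "X extreme_point_of unit_ball N \<Longrightarrow> Y = X \<or> Y = - X \<Longrightarrow> Y \<in> Ext (unit_ball N)"
  by (auto simp: Ext_def intro: ext_neg)

end

theorem theorem3p11:
  fixes N :: "real^2 \<Rightarrow> real" and T :: "real^3^2"
  assumes "is_norm N"
    and "polygonal N"
    and "op_norm N T = 1"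
  shows "extreme_contraction N T \<longleftrightarrow>
           (card (norm_attaining N T \<inter> Ext (unit_ball infnorm)) \<ge> 6 \<and>
            (\<lambda>x. T *v x) ` (norm_attaining N T \<inter> Ext (unit_ball infnorm))
              \<subseteq> Ext (unit_ball N))"
proof -
  interpret nm N by (rule nm.intro) (rule assms(1))
  define c1 where "c1 = column 1 T"
  define c2 where "c2 = column 2 T"
  define c3 where "c3 = column 3 T"
  have G: "G c1 c2 c3" using OPN[of T] assms(3) unfolding c1_def c2_def c3_def by simp
  have TV: "T *v vector [x, y, z] = x *\<^sub>R c1 + y *\<^sub>R c2 + z *\<^sub>R c3" for x y z :: real
    unfolding MV c1_def c2_def c3_def by simp
  have t1: "T *v vector [1, 1, 1] = c1 + c2 + c3" by (simp add: TV)
  have t2: "T *v vector [-1, -1, -1] = - (c1 + c2 + c3)" by (simp add: TV algebra_simps)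
  have t3: "T *v vector [1, 1, -1] = c1 + c2 - c3" by (simp add: TV)
  have t4: "T *v vector [-1, -1, 1] = - (c1 + c2 - c3)" by (simp add: TV algebra_simps)
  have t5: "T *v vector [1, -1, 1] = c1 - c2 + c3" by (simp add: TV)
  have t6: "T *v vector [-1, 1, -1] = - (c1 - c2 + c3)" by (simp add: TV algebra_simps)
  have t7: "T *v vector [-1, 1, 1] = - c1 + c2 + c3" by (simp add: TV)
  have t8: "T *v vector [1, -1, -1] = - (- c1 + c2 + c3)" by (simp add: TV algebra_simps)
  let ?A = "c1 + c2 + c3" and ?B = "c1 + c2 - c3" and ?C = "c1 - c2 + c3" and ?D = "- c1 + c2 + c3"
  let ?P1 = "(N ?A = 1 \<and> N ?B = 1 \<and> N ?C = 1) \<or> (N ?A = 1 \<and> N ?B = 1 \<and> N ?D = 1) \<or>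
         (N ?A = 1 \<and> N ?C = 1 \<and> N ?D = 1) \<or> (N ?B = 1 \<and> N ?C = 1 \<and> N ?D = 1)"
  let ?P2 = "\<forall>X \<in> {?A, ?B, ?C, ?D}. N X = 1 \<longrightarrow> X extreme_point_of unit_ball N"
  have ExtC: "Ext (unit_ball (infnorm :: real^3 \<Rightarrow> real)) = V8set"
    unfolding Ext_def using cube_ext V8char by auto
  have NA: "norm_attaining N T \<inter> Ext (unit_ball infnorm) = {v \<in> V8set. N (T *v v) = 1}"
    unfolding ExtC norm_attaining_def assms(3) using inf1 V8char by auto
  have card: "6 \<le> card {v \<in> V8set. N (T *v v) = 1} \<longleftrightarrow> ?P1"
    using card8[of "\<lambda>v. N (T *v v) = 1"] unfolding t1 t2 t3 t4 t5 t6 t7 t8 Nneg by simp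
  have img: "(\<lambda>x. T *v x) ` {v \<in> V8set. N (T *v v) = 1} \<subseteq> Ext (unit_ball N) \<longleftrightarrow> ?P2"
  proof
    assume P2: ?P2
    show "(\<lambda>x. T *v x) ` {v \<in> V8set. N (T *v v) = 1} \<subseteq> Ext (unit_ball N)"
    proof (rule image_subsetI)
      fix v assume v: "v \<in> {v \<in> V8set. N (T *v v) = 1}"
      then have n: "N (T *v v) = 1" by simp
      have "v = vector [1, 1, 1] \<or> v = vector [-1, -1, -1] \<or> v = vector [1, 1, -1] \<or> v = vector [-1, -1, 1] \<or>
            v = vector [1, -1, 1] \<or> v = vector [-1, 1, -1] \<or> v = vector [-1, 1, 1] \<or> v = vector [1, -1, -1]"
        using v unfolding V8set_def by simp
      then show "T *v v \<in> Ext (unit_ball N)"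
      proof (elim disjE)
        assume h: "v = vector [1, 1, 1]"
        have nX: "N ?A = 1" using n unfolding h t1 Nneg .
        have "?A extreme_point_of unit_ball N" using P2 nX by auto
        then show ?thesis by (rule extpm) (simp add: h t1)
      next
        assume h: "v = vector [-1, -1, -1]"
        have nX: "N ?A = 1" using n unfolding h t2 Nneg .
        have "?A extreme_point_of unit_ball N" using P2 nX by auto
        then show ?thesis by (rule extpm) (simp add: h t2)
      next
        assume h: "v = vector [1, 1, -1]"
        have nX: "N ?B = 1" using n unfolding h t3 Nneg .
        have "?B extreme_point_of unit_ball N" using P2 nX by auto
        then show ?thesis by (rule extpm) (simp add: h t3)
      next
        assume h: "v = vector [-1, -1, 1]"
        have nX: "N ?B = 1" using n unfolding h t4 Nneg .
        have "?B extreme_point_of unit_ball N" using P2 nX by auto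
        then show ?thesis by (rule extpm) (simp add: h t4)
      next
        assume h: "v = vector [1, -1, 1]"
        have nX: "N ?C = 1" using n unfolding h t5 Nneg .
        have "?C extreme_point_of unit_ball N" using P2 nX by auto
        then show ?thesis by (rule extpm) (simp add: h t5)
      next
        assume h: "v = vector [-1, 1, -1]"
        have nX: "N ?C = 1" using n unfolding h t6 Nneg .
        have "?C extreme_point_of unit_ball N" using P2 nX by auto
        then show ?thesis by (rule extpm) (simp add: h t6)
      next
        assume h: "v = vector [-1, 1, 1]"
        have nX: "N ?D = 1" using n unfolding h t7 Nneg .
        have "?D extreme_point_of unit_ball N" using P2 nX by auto
        then show ?thesis by (rule extpm) (simp add: h t7)
      next
        assume h: "v = vector [1, -1, -1]"
        have nX: "N ?D = 1" using n unfolding h t8 Nneg .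
        have "?D extreme_point_of unit_ball N" using P2 nX by auto
        then show ?thesis by (rule extpm) (simp add: h t8)
      qed
    qed
  next
    assume sub: "(\<lambda>x. T *v x) ` {v \<in> V8set. N (T *v v) = 1} \<subseteq> Ext (unit_ball N)"
    have ext: "T *v v \<in> Ext (unit_ball N)" if "v \<in> V8set" "N (T *v v) = 1" for v
      using sub that by blast
    have inV: "vector [1, 1, 1] \<in> V8set" "vector [1, 1, -1] \<in> V8set" "vector [1, -1, 1] \<in> V8set" "vector [-1, 1, 1] \<in> V8set"
      unfolding V8set_def by simp_all
    show ?P2
    proof (intro ballI impI)
      fix X assume X: "X \<in> {?A, ?B, ?C, ?D}" and n: "N X = 1"
      from X show "X extreme_point_of unit_ball N"
      proof (elim insertE)
        assume "X = ?A" then show ?thesis using ext[OF inV(1)] n t1 by (simp add: Ext_def)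
      next
        assume "X = ?B" then show ?thesis using ext[OF inV(2)] n t3 by (simp add: Ext_def)
      next
        assume "X = ?C" then show ?thesis using ext[OF inV(3)] n t5 by (simp add: Ext_def)
      next
        assume "X = ?D" then show ?thesis using ext[OF inV(4)] n t7 by (simp add: Ext_def)
      next
        assume "X \<in> {}" then show ?thesis by simp
      qed
    qed
  qed
  have ext: "extreme_contraction N T \<longleftrightarrow> ?P1 \<and> ?P2"
  proof
    assume e: "extreme_contraction N T"
    have "\<not> NE c1 c2 c3" using NE_notext[of T] e unfolding extreme_contraction_def c1_def c2_def c3_def by blast
    then show "?P1 \<and> ?P2" using HD[OF G] by blast
  next
    assume P: "?P1 \<and> ?P2"
    show "extreme_contraction N T" unfolding extreme_contraction_def
      by (rule RHSext[of T c1 c2 c3]) (use assms(3) P in \<open>simp_all add: c1_def c2_def c3_def\<close>)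
  qed
  show ?thesis unfolding NA using card img ext by simp
qed

end
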